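(* Let $\Gamma=(V,E,\ell)$ be a finite labeled simplicial graph with all labels even whose Artin group $A_\Gamma$ is of FC-type, let $\mathbb{K}$ be a field, and let $\chi:A_\Gamma\to\mathbb{Z}$ be a surjective, $\mathbb{K}$ non-resonant homomorphism. Fix $k$ and let $\bar X=(X_1,\dots,X_r)$ be a list of distinct simplices of $\mathcal{F}^f(\Gamma)$ with $k+2$ vertices and $\bar Y=(Y_1,\dots,Y_r)$ a list of distinct simplices with $k+1$ vertices. Let $\mathfrak{m}^\chi_{(\bar X,\bar Y)}\in\mathbb{K}[t^{\pm1}]$ be the $r\times r$ minor of $M^\chi_{k+1}(t)$ with rows/columns indexed by $\bar X,\bar Y$, and $\mathfrak{m}_{(\bar X,\bar Y)}\in\mathbb{K}$ the corresponding minor of $M_{k+1}$. Then: (i) $\mathfrak{m}^\chi_{(\bar X,\bar Y)}=\dfrac{\mathbf{p}_{\bar X}\mathbf{q}_{\bar X}}{\mathbf{p}_{\bar Y}\mathbf{q}_{\bar Y}}\,\mathfrak{m}_{(\bar X,\bar Y)}$; (ii) $\mathfrak{m}^\chi_{(\bar X,\bar Y)}\neq 0$ if and only if $(\bar X,\bar Y)$ is acyclic of order $r$; (iii) the largest $r$ for which some $r\times r$ minor $\mathfrak{m}^\chi_{(\bar X,\bar Y)}$ is nonzero is $r=\dim_{\mathbb{K}}\operatorname{im}\partial_{k+1}$.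
   Context: $\Gamma=(V,E,\ell)$: finite simplicial graph, labels $\ell(e)=2\tilde\ell(e)$, $\tilde\ell(e)\ge1$. $A_\Gamma=\langle g_v\ (v\in V)\mid (g_vg_w)^{\tilde\ell(e)}=(g_wg_v)^{\tilde\ell(e)},\ e=\{v,w\}\in E\rangle$. For a clique $X\subseteq V$, $W_X$ is the Coxeter group on $g_v$ ($v\in X$) with $g_v^2=1$, $(g_vg_w)^{\ell(\{v,w\})}=1$; FC-type means all such $W_X$ are finite. $\mathcal{F}^f(\Gamma)$ is the simplicial complex on $V$ whose simplices are cliques $X$ with $W_X$ finite (plus $\emptyset$). Fix a total order on $V$; for $X=\{x_0<\dots<x_k\}$, $X_{x_i}=X\setminus\{x_i\}$, $\langle X_{x_i}|X\rangle=(-1)^i$. The (augmented) flag chain complex $C^f_*(\Gamma)$ over $\mathbb{K}$ has basis $c_X$ of $C^f_k$ the simplices with $k+1$ vertices and $\partial_k c_X=\sum_{v\in X}\langle X_v|X\rangle c_{X_v}$; $M_{k+1}$ is the matrix of $\partial_{k+1}$ in these bases (entry $\langle Y|X\rangle$ if $Y\subset X$, $0$ otherwise). $m_v=\chi(g_v)$; for an edge $e=\{v,w\}$, $m_e=m_v+m_w$. $\chi$ is $\mathbb{K}$ non-resonant if $m_v\neq0$ for all $v\in V$ and there is no edge $e$ with $m_e=0$ and $\tilde\ell(e)\cdot1_{\mathbb{K}}=0$. Put $q_n(x)=(x^n-1)/(x-1)$. For a simplex $X$: $\mathbf{p}_X=\prod_{v\in X}(t^{m_v}-1)$, $\mathbf{q}_X=\prod_{e\subseteq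 X,\,e\in E}q_{\tilde\ell(e)}(t^{m_e})$; for a list $\bar X=(X_1,\dots,X_r)$, $\mathbf{p}_{\bar X}=\prod_i\mathbf{p}_{X_i}$, $\mathbf{q}_{\bar X}=\prod_i\mathbf{q}_{X_i}$. Equivariant complex: $C^\chi_k(\Gamma)$ is free over $\mathbb{K}[t^{\pm1}]$ with basis $\sigma^\chi_X$, $X$ simplex with $k+1$ vertices, and $\partial^\chi_k\sigma^\chi_X=\sum_{v\in X}\langle X_v|X\rangle(t^{m_v}-1)\big[\prod_{w\in X_v}q_{\tilde\ell(\{v,w\})}(t^{m_v+m_w})\big]\sigma^\chi_{X_v}$. $M^\chi_{k+1}(t)$ is the matrix of $\partial^\chi_{k+1}$ in these bases. Acyclic pairs: for $\bar X,\bar Y$ as in the claim, let $N(\bar X)$ be the subcomplex of $\mathcal{F}^f(\Gamma)$ consisting of all simplices with at most $k+1$ vertices together with the simplices in $\bar X$, and $N(\bar Y^c)$ the subcomplex of all simplices with at most $k$ vertices together with the simplices with $k+1$ vertices not in $\bar Y$. $(\bar X,\bar Y)$ is acyclic of order $r$ if $|\bar X|=|\bar Y|=r$ and the pair $(N(\bar X),N(\bar Y^c))$ is acyclic, i.e. $H_*(N(\bar X),N(\bar Y^c);\mathbb{K})=0$. *)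

theory Defs
  imports "HOL-Computational_Algebra.Formal_Laurent_Series" "HOL-Library.Function_Algebras" "Jordan_Normal_Form.Determinant"
begin

text \<open>A finite labelled simplicial graph: a finite vertex set V (vertex type carries
the fixed total order), an edge set E of 2-element subsets of V, and the
half-labels lt e (so the label is l(e) = 2 * lt e), with lt e \<ge> 1.\<close>

definition labelled_graph :: "'v set \<Rightarrow> 'v set set \<Rightarrow> ('v set \<Rightarrow> nat) \<Rightarrow> bool" where
  "labelled_graph V E lt \<longleftrightarrow> finite V \<and>
     (\<forall>e\<in>E. \<exists>v w. v \<in> V \<and> w \<in> V \<and> v \<noteq> w \<and> e = {v, w}) \<and>
     (\<forall>e\<in>E. lt e \<ge> 1)"

definition clique :: "'v set \<Rightarrow> 'v set set \<Rightarrow> 'v set \<Rightarrow> bool" where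
  "clique V E X \<longleftrightarrow> X \<subseteq> V \<and> (\<forall>v\<in>X. \<forall>w\<in>X. v \<noteq> w \<longrightarrow> {v, w} \<in> E)"

text \<open>Word equivalence in the Coxeter group W_X on generators X with
relations s^2 = 1 and (s t)^(mm s t) = 1 (monoid presentation; valid since
every generator is an involution).\<close>

inductive cox_eq :: "'v set \<Rightarrow> ('v \<Rightarrow> 'v \<Rightarrow> nat) \<Rightarrow> 'v list \<Rightarrow> 'v list \<Rightarrow> bool"
  for X mm where
  refl: "cox_eq X mm w w"
| sym: "cox_eq X mm u w \<Longrightarrow> cox_eq X mm w u"
| trans: "cox_eq X mm u v \<Longrightarrow> cox_eq X mm v w \<Longrightarrow> cox_eq X mm u w"
| sq: "s \<in> X \<Longrightarrow> cox_eq X mm (a @ [s, s] @ b) (a @ b)"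
| braid: "s \<in> X \<Longrightarrow> t \<in> X \<Longrightarrow> s \<noteq> t \<Longrightarrow>
          cox_eq X mm (a @ concat (replicate (mm s t) [s, t]) @ b) (a @ b)"

definition coxeter_finite :: "('v set \<Rightarrow> nat) \<Rightarrow> 'v set \<Rightarrow> bool" where
  "coxeter_finite lt X \<longleftrightarrow>
     finite (lists X // {(u, w). u \<in> lists X \<and> w \<in> lists X \<and>
                                 cox_eq X (\<lambda>s t. 2 * lt {s, t}) u w})"

definition FC_type :: "'v set \<Rightarrow> 'v set set \<Rightarrow> ('v set \<Rightarrow> nat) \<Rightarrow> bool" where
  "FC_type V E lt \<longleftrightarrow> (\<forall>X. clique V E X \<longrightarrow> coxeter_finite lt X)"

text \<open>Simplices of F^f(Gamma) (including the empty simplex).\<close>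

definition simplex :: "'v set \<Rightarrow> 'v set set \<Rightarrow> ('v set \<Rightarrow> nat) \<Rightarrow> 'v set \<Rightarrow> bool" where
  "simplex V E lt X \<longleftrightarrow> clique V E X \<and> coxeter_finite lt X"

text \<open>A homomorphism chi : A_Gamma \<rightarrow> Z is given by its values m v = chi(g_v)
(every assignment extends, since Z is abelian and the Artin relations
become trivial there).\<close>

definition chi_word :: "('v \<Rightarrow> int) \<Rightarrow> ('v \<times> bool) list \<Rightarrow> int" where
  "chi_word m w = sum_list (map (\<lambda>(v, b). if b then m v else - m v) w)"

definition chi_surjective :: "'v set \<Rightarrow> ('v \<Rightarrow> int) \<Rightarrow> bool" where
  "chi_surjective V m \<longleftrightarrow> chi_word m ` lists (V \<times> UNIV) = UNIV"

definition non_resonant :: "'k::field itself \<Rightarrow> 'v set \<Rightarrow> 'v set set \<Rightarrow> ('v set \<Rightarrow> nat) \<Rightarrow> ('v \<Rightarrow> int) \<Rightarrow> bool"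
  where
  "non_resonant TYPE('k) V E lt m \<longleftrightarrow>
     (\<forall>v\<in>V. m v \<noteq> 0) \<and>
     \<not> (\<exists>e\<in>E. (\<Sum>v\<in>e. m v) = 0 \<and> (of_nat (lt e) :: 'k) = 0)"

definition tpow :: "int \<Rightarrow> 'k::field fls" where
  "tpow i = fls_X_intpow i"

text \<open>q_n(x) = (x^n - 1)/(x - 1) as a polynomial, i.e. 1 + x + ... + x^(n-1).\<close>
definition qpoly :: "nat \<Rightarrow> 'a::comm_ring_1 \<Rightarrow> 'a" where
  "qpoly n x = (\<Sum>i<n. x ^ i)"

definition pX :: "('v \<Rightarrow> int) \<Rightarrow> 'v set \<Rightarrow> 'k::field fls" where
  "pX m X = (\<Prod>v\<in>X. tpow (m v) - 1)"

definition qX :: "'v set set \<Rightarrow> ('v set \<Rightarrow> nat) \<Rightarrow> ('v \<Rightarrow> int) \<Rightarrow> 'v set \<Rightarrow> 'k::field fls" where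
  "qX E lt m X = (\<Prod>e\<in>{e\<in>E. e \<subseteq> X}. qpoly (lt e) (tpow (\<Sum>v\<in>e. m v)))"

definition pL :: "('v \<Rightarrow> int) \<Rightarrow> 'v set list \<Rightarrow> 'k::field fls" where
  "pL m Xs = prod_list (map (pX m) Xs)"

definition qL :: "'v set set \<Rightarrow> ('v set \<Rightarrow> nat) \<Rightarrow> ('v \<Rightarrow> int) \<Rightarrow> 'v set list \<Rightarrow> 'k::field fls" where
  "qL E lt m Xs = prod_list (map (qX E lt m) Xs)"

text \<open>incidence Y X = <Y|X> = (-1)^i if Y = X minus its i-th smallest vertex
(counting from 0), and 0 otherwise.\<close>
definition incidence :: "'v::linorder set \<Rightarrow> 'v set \<Rightarrow> int" where
  "incidence Y X = (if Y \<subseteq> X \<and> card X = card Y + 1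
      then (-1) ^ card {x\<in>X. x < the_elem (X - Y)} else 0)"

definition chi_entry :: "('v set \<Rightarrow> nat) \<Rightarrow> ('v \<Rightarrow> int) \<Rightarrow> 'v::linorder set \<Rightarrow> 'v set \<Rightarrow> 'k::field fls" where
  "chi_entry lt m X Y = (if Y \<subseteq> X \<and> card X = card Y + 1 then
      (let v = the_elem (X - Y) in
        of_int (incidence Y X) * (tpow (m v) - 1) *
        (\<Prod>w\<in>Y. qpoly (lt {v, w}) (tpow (m v + m w))))
      else 0)"

definition minor_chi :: "('v set \<Rightarrow> nat) \<Rightarrow> ('v \<Rightarrow> int) \<Rightarrow> 'v::linorder set list \<Rightarrow> 'v set list \<Rightarrow> 'k::field fls" where
  "minor_chi lt m Xs Ys =
     det (mat (length Xs) (length Ys) (\<lambda>(i, j). chi_entry lt m (Xs ! i) (Ys ! j)))"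

definition minor_flag :: "'v::linorder set list \<Rightarrow> 'v set list \<Rightarrow> 'k::field" where
  "minor_flag Xs Ys =
     det (mat (length Xs) (length Ys) (\<lambda>(i, j). of_int (incidence (Ys ! j) (Xs ! i))))"

text \<open>For complexes L \<subseteq> N (sets of finite vertex sets, augmented: the empty
simplex counts), relative chains with d vertices are K-valued functions supported on
simplices of N - L with d vertices; rel_bd is the simplicial boundary.\<close>

definition rel_chains :: "'v set set \<Rightarrow> 'v set set \<Rightarrow> nat \<Rightarrow> ('v set \<Rightarrow> 'k::field) set" where
  "rel_chains N L d = {c. \<forall>\<sigma>. c \<sigma> \<noteq> 0 \<longrightarrow> \<sigma> \<in> N - L \<and> card \<sigma> = d}"

definition rel_bd :: "'v set set \<Rightarrow> 'v set set \<Rightarrow> nat \<Rightarrow> ('v set \<Rightarrow> 'k::field) \<Rightarrow> ('v::linorder set \<Rightarrow> 'k)" where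
  "rel_bd N L d c = (\<lambda>\<tau>. if \<tau> \<in> N - L \<and> card \<tau> + 1 = d then
       (\<Sum>\<sigma>\<in>{\<sigma>\<in>N - L. card \<sigma> = d \<and> \<tau> \<subseteq> \<sigma>}. of_int (incidence \<tau> \<sigma>) * c \<sigma>)
     else 0)"

definition rel_acyclic :: "'k::field itself \<Rightarrow> 'v::linorder set set \<Rightarrow> 'v set set \<Rightarrow> bool" where
  "rel_acyclic TYPE('k) N L \<longleftrightarrow>
     (\<forall>d. \<forall>c \<in> (rel_chains N L d :: ('v set \<Rightarrow> 'k) set). rel_bd N L d c = (\<lambda>_. 0) \<longrightarrow>
        (\<exists>b \<in> rel_chains N L (Suc d). rel_bd N L (Suc d) b = c))"

text \<open>N(Xs): simplices with at most k+1 vertices, plus those in Xs.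
N(Ys^c): simplices with at most k vertices, plus those with k+1 vertices not in Ys.
Here the number n = k+1 is used.\<close>
definition N_X :: "'v set \<Rightarrow> 'v set set \<Rightarrow> ('v set \<Rightarrow> nat) \<Rightarrow> nat \<Rightarrow> 'v set list \<Rightarrow> 'v set set" where
  "N_X V E lt n Xs = {\<sigma>. simplex V E lt \<sigma> \<and> (card \<sigma> \<le> n \<or> \<sigma> \<in> set Xs)}"

definition N_Yc :: "'v set \<Rightarrow> 'v set set \<Rightarrow> ('v set \<Rightarrow> nat) \<Rightarrow> nat \<Rightarrow> 'v set list \<Rightarrow> 'v set set" where
  "N_Yc V E lt n Ys = {\<sigma>. simplex V E lt \<sigma> \<and> (card \<sigma> < n \<or> (card \<sigma> = n \<and> \<sigma> \<notin> set Ys))}"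

definition acyclic_pair :: "'k::field itself \<Rightarrow> 'v set \<Rightarrow> 'v set set \<Rightarrow> ('v set \<Rightarrow> nat) \<Rightarrow> nat \<Rightarrow>
    'v::linorder set list \<Rightarrow> 'v set list \<Rightarrow> nat \<Rightarrow> bool" where
  "acyclic_pair TYPE('k) V E lt n Xs Ys r \<longleftrightarrow>
     length Xs = r \<and> length Ys = r \<and> rel_acyclic TYPE('k) (N_X V E lt n Xs) (N_Yc V E lt n Ys)"

definition flag_chains :: "'v set \<Rightarrow> 'v set set \<Rightarrow> ('v set \<Rightarrow> nat) \<Rightarrow> nat \<Rightarrow> ('v set \<Rightarrow> 'k::field) set" where
  "flag_chains V E lt d = {c. \<forall>\<sigma>. c \<sigma> \<noteq> 0 \<longrightarrow> simplex V E lt \<sigma> \<and> card \<sigma> = d}"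

definition flag_bd :: "'v set \<Rightarrow> 'v set set \<Rightarrow> ('v set \<Rightarrow> nat) \<Rightarrow> nat \<Rightarrow> ('v set \<Rightarrow> 'k::field) \<Rightarrow> ('v::linorder set \<Rightarrow> 'k)" where
  "flag_bd V E lt d c = rel_bd (Collect (simplex V E lt)) {} d c"

definition fun_scale :: "'k::field \<Rightarrow> ('a \<Rightarrow> 'k) \<Rightarrow> ('a \<Rightarrow> 'k)" where
  "fun_scale a f = (\<lambda>x. a * f x)"

definition rank_bd :: "'k::field itself \<Rightarrow> 'v::linorder set \<Rightarrow> 'v set set \<Rightarrow> ('v set \<Rightarrow> nat) \<Rightarrow> nat \<Rightarrow> nat" where
  "rank_bd TYPE('k) V E lt d =
     vector_space.dim (fun_scale :: 'k \<Rightarrow> _)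
       (flag_bd V E lt d ` (flag_chains V E lt d :: ('v set \<Rightarrow> 'k) set))"

end

theory Submission
  imports Defs
begin
lemma tpow_sub1_nz:
  assumes "i \<noteq> 0" shows "tpow i - 1 \<noteq> (0::'k::field fls)"
proof
  assume "tpow i - 1 = (0::'k fls)"
  hence "fls_nth (tpow i - 1 :: 'k fls) 0 = 0" by simp
  thus False using assms by (simp add: tpow_def)
qed

lemma qpoly_nz:
  assumes "l \<ge> 1" "s \<noteq> 0 \<or> (of_nat l :: 'k) \<noteq> 0"
  shows "qpoly l (tpow s :: 'k::field fls) \<noteq> 0"
proof
  assume H: "qpoly l (tpow s :: 'k::field fls) = 0"
  have "fls_nth (qpoly l (tpow s :: 'k::field fls)) 0 = (\<Sum>i<l. (if int i * s = 0 then 1 else 0))"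
    unfolding qpoly_def tpow_def fls_nth_sum fls_X_intpow_power by (intro sum.cong) auto
  also have "\<dots> = (if s = 0 then of_nat l else 1)"
  proof (cases "s = 0")
    case True thus ?thesis by simp
  next
    case False
    have "(\<Sum>i<l. (if int i * s = 0 then 1 else 0) :: 'k) = (\<Sum>i<l. (if i = 0 then 1 else 0))"
      using False by (intro sum.cong) auto
    also have "\<dots> = 1" using assms(1) by (simp add: sum.delta)
    finally show ?thesis using False by simp
  qed
  finally show False using H assms by (auto split: if_splits)
qed


lemma edges_insert:
  assumes G: "labelled_graph V E lt" and fY: "finite Y" and vY: "v \<notin> Y"
    and cl: "clique V E (insert v Y)"
  shows "{e\<in>E. e \<subseteq> insert v Y} = {e\<in>E. e \<subseteq> Y} \<union> (\<lambda>w. {v, w}) ` Y"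
proof (intro equalityI subsetI)
  fix e assume e: "e \<in> {e\<in>E. e \<subseteq> insert v Y}"
  hence eE: "e \<in> E" and eS: "e \<subseteq> insert v Y" by auto
  have "\<forall>e\<in>E. \<exists>v w. v \<in> V \<and> w \<in> V \<and> v \<noteq> w \<and> e = {v, w}"
    using G unfolding labelled_graph_def by blast
  then obtain a b where ab: "a \<noteq> b" "e = {a, b}" using eE by blast
  show "e \<in> {e\<in>E. e \<subseteq> Y} \<union> (\<lambda>w. {v, w}) ` Y"
  proof (cases "e \<subseteq> Y")
    case True thus ?thesis using eE by blast
  next
    case False
    hence "a = v \<or> b = v" using eS ab by blast
    thus ?thesis
    proof
      assume "a = v"
      hence "b \<in> Y" using eS ab by blast
      thus ?thesis using ab \<open>a = v\<close> by blast
    next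
      assume "b = v"
      hence "a \<in> Y" using eS ab by blast
      moreover have "e = {v, a}" using ab \<open>b = v\<close> by blast
      ultimately show ?thesis by blast
    qed
  qed
next
  fix e assume "e \<in> {e\<in>E. e \<subseteq> Y} \<union> (\<lambda>w. {v, w}) ` Y"
  hence "(e \<in> E \<and> e \<subseteq> Y) \<or> (\<exists>w\<in>Y. e = {v, w})" by blast
  thus "e \<in> {e\<in>E. e \<subseteq> insert v Y}"
  proof
    assume "e \<in> E \<and> e \<subseteq> Y" thus ?thesis by blast
  next
    assume "\<exists>w\<in>Y. e = {v, w}"
    then obtain w where w: "w \<in> Y" "e = {v, w}" by blast
    have "\<forall>x\<in>insert v Y. \<forall>y\<in>insert v Y. x \<noteq> y \<longrightarrow> {x, y} \<in> E"
      using cl unfolding clique_def by blast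
    moreover have "v \<noteq> w" using w vY by blast
    ultimately have "{v, w} \<in> E" using w by blast
    thus ?thesis using w by blast
  qed
qed

lemma simplex_finite: "labelled_graph V E lt \<Longrightarrow> simplex V E lt X \<Longrightarrow> finite X"
  unfolding labelled_graph_def simplex_def clique_def using finite_subset[of X V] by blast


lemma qX_insert:
  assumes G: "labelled_graph V E lt" and fY: "finite Y" and vY: "v \<notin> Y"
    and cl: "clique V E (insert v Y)"
  shows "(qX E lt m (insert v Y) :: 'k::field fls) =
     qX E lt m Y * (\<Prod>w\<in>Y. qpoly (lt {v, w}) (tpow (m v + m w)))"
proof -
  have fin1: "finite {e\<in>E. e \<subseteq> Y}"
    by (rule finite_subset[of _ "Pow Y"]) (use fY in auto)
  have disj: "{e\<in>E. e \<subseteq> Y} \<inter> (\<lambda>w. {v, w}) ` Y = {}" using vY by auto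
  have inj: "inj_on (\<lambda>w. {v, w}) Y" using vY by (auto simp: inj_on_def doubleton_eq_iff)
  have "(qX E lt m (insert v Y) :: 'k fls) = qX E lt m Y *
      (\<Prod>e\<in>(\<lambda>w. {v, w}) ` Y. qpoly (lt e) (tpow (\<Sum>u\<in>e. m u)))"
    unfolding qX_def edges_insert[OF G fY vY cl]
    by (rule prod.union_disjoint[OF fin1 _ disj]) (use fY in simp)
  also have "(\<Prod>e\<in>(\<lambda>w. {v, w}) ` Y. qpoly (lt e) (tpow (\<Sum>u\<in>e. m u)) :: 'k fls)
      = (\<Prod>w\<in>Y. qpoly (lt {v, w}) (tpow (m v + m w)))"
  proof (subst prod.reindex[OF inj], rule prod.cong)
    fix w assume "w \<in> Y"
    hence "v \<noteq> w" using vY by auto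
    thus "((\<lambda>e. qpoly (lt e) (tpow (\<Sum>u\<in>e. m u))) \<circ> (\<lambda>w. {v, w})) w = (qpoly (lt {v, w}) (tpow (m v + m w)) :: 'k fls)"
      by simp
  qed simp
  finally show ?thesis .
qed

definition aZ :: "'v set set \<Rightarrow> ('v set \<Rightarrow> nat) \<Rightarrow> ('v \<Rightarrow> int) \<Rightarrow> 'v set \<Rightarrow> 'k::field fls" where
  "aZ E lt m Z = pX m Z * qX E lt m Z"

lemma aZ_nz:
  assumes G: "labelled_graph V E lt" and NR: "non_resonant TYPE('k::field) V E lt m"
    and S: "simplex V E lt Z"
  shows "(aZ E lt m Z :: 'k fls) \<noteq> 0"
proof -
  have fZ: "finite Z" using simplex_finite[OF G S] .
  have ZV: "Z \<subseteq> V" using S unfolding simplex_def clique_def by blast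
  have mv: "\<forall>v\<in>V. m v \<noteq> 0" using NR unfolding non_resonant_def by blast
  have p: "(pX m Z :: 'k fls) \<noteq> 0"
    unfolding pX_def
  proof (subst prod_zero_iff[OF fZ], clarify)
    fix v assume "v \<in> Z" "(tpow (m v) - 1 :: 'k fls) = 0"
    thus False using tpow_sub1_nz[of "m v"] mv ZV by blast
  qed
  have fE: "finite {e\<in>E. e \<subseteq> Z}"
    by (rule finite_subset[of _ "Pow Z"]) (use fZ in auto)
  have q: "(qX E lt m Z :: 'k fls) \<noteq> 0"
    unfolding qX_def
  proof (subst prod_zero_iff[OF fE], clarify)
    fix e assume e: "e \<in> E" "e \<subseteq> Z" and z: "(qpoly (lt e) (tpow (\<Sum>v\<in>e. m v)) :: 'k fls) = 0"
    have "lt e \<ge> 1" using G e unfolding labelled_graph_def by blast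
    moreover have "(\<Sum>v\<in>e. m v) \<noteq> 0 \<or> (of_nat (lt e) :: 'k) \<noteq> 0"
      using NR e unfolding non_resonant_def by blast
    ultimately show False using qpoly_nz z by blast
  qed
  show ?thesis unfolding aZ_def using p q by simp
qed

lemma chi_entry_eq:
  assumes G: "labelled_graph V E lt" and SX: "simplex V E lt X" and SY: "simplex V E lt Y"
    and c: "card X = card Y + 1" and nz: "(aZ E lt m Y :: 'k::field fls) \<noteq> 0"
  shows "(chi_entry lt m X Y :: 'k fls) = of_int (incidence Y X) * (aZ E lt m X / aZ E lt m Y)"
proof (cases "Y \<subseteq> X")
  case False
  thus ?thesis unfolding chi_entry_def incidence_def by simp
next
  case True
  have fX: "finite X" using simplex_finite[OF G SX] .
  have fY: "finite Y" using simplex_finite[OF G SY] .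
  have "card (X - Y) = 1" using True c fY by (simp add: card_Diff_subset)
  then obtain v where v: "X - Y = {v}" by (auto simp: card_Suc_eq)
  have vY: "v \<notin> Y" using v by blast
  have XI: "X = insert v Y" using v True by blast
  have cl: "clique V E (insert v Y)" using SX XI unfolding simplex_def by simp
  define P :: "'k fls" where "P = (\<Prod>w\<in>Y. qpoly (lt {v, w}) (tpow (m v + m w)))"
  have ce: "(chi_entry lt m X Y :: 'k fls) = of_int (incidence Y X) * ((tpow (m v) - 1) * P)"
    unfolding chi_entry_def using True c v by (simp add: Let_def P_def mult.assoc)
  have "(aZ E lt m X :: 'k fls) = aZ E lt m Y * ((tpow (m v) - 1) * P)"
    unfolding aZ_def XI pX_def qX_insert[OF G fY vY cl] P_def
    using fY vY by (simp add: prod.insert mult_ac)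
  hence "(aZ E lt m X :: 'k fls) / aZ E lt m Y = (tpow (m v) - 1) * P" using nz by simp
  thus ?thesis using ce by simp
qed

lemma det_scale:
  "det (mat r r (\<lambda>(i,j). g i j * (a i / b j))) =
     (\<Prod>i<r. a i) / (\<Prod>j<r. b j) * det (mat r r (\<lambda>(i,j). g i j) :: 'a::field mat)"
proof -
  have "det (mat r r (\<lambda>(i,j). g i j * (a i / b j))) =
     (\<Sum>p\<in>{p. p permutes {0..<r}}. signof p * (\<Prod>i=0..<r. g i (p i) * (a i / b (p i))))"
    by (subst det_def'[of _ r]) (auto intro!: sum.cong prod.cong)
  also have "\<dots> = (\<Sum>p\<in>{p. p permutes {0..<r}}. (\<Prod>i<r. a i) / (\<Prod>j<r. b j) *
       (signof p * (\<Prod>i=0..<r. g i (p i))))"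
  proof (rule sum.cong[OF HOL.refl])
    fix p assume "p \<in> {p. p permutes {0..<r}}"
    hence pp: "p permutes {0..<r}" by simp
    have "(\<Prod>i=0..<r. b (p i)) = (\<Prod>j=0..<r. b j)"
      using prod.permute[OF pp, of b] by (simp add: comp_def)
    thus "signof p * (\<Prod>i=0..<r. g i (p i) * (a i / b (p i))) =
       (\<Prod>i<r. a i) / (\<Prod>j<r. b j) * (signof p * (\<Prod>i=0..<r. g i (p i)))"
      by (simp add: prod.distrib prod_dividef atLeast0LessThan)
  qed
  also have "\<dots> = (\<Prod>i<r. a i) / (\<Prod>j<r. b j) * det (mat r r (\<lambda>(i,j). g i j))"
    by (subst det_def'[of _ r]) (auto simp: sum_distrib_left intro!: sum.cong prod.cong)
  finally show ?thesis .
qed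

interpretation flsc: comm_ring_hom "fls_const :: 'k::field \<Rightarrow> 'k fls"
  by unfold_locales (simp_all add: fls_plus_const)

lemma prod_list_nth: "prod_list (map f xs) = (\<Prod>i<length xs. f (xs ! i))"
  by (simp add: prod.list_conv_set_nth atLeast0LessThan)

lemma part_i:
  assumes G: "labelled_graph V E lt" and NR: "non_resonant TYPE('k::field) V E lt m"
    and SX: "\<forall>X\<in>set Xs. simplex V E lt X \<and> card X = n + 1"
    and SY: "\<forall>Y\<in>set Ys. simplex V E lt Y \<and> card Y = n"
    and len: "length Ys = length Xs"
  shows "(minor_chi lt m Xs Ys :: 'k fls) =
           (pL m Xs * qL E lt m Xs) / (pL m Ys * qL E lt m Ys) * fls_const (minor_flag Xs Ys)"
proof -
  define r where "r = length Xs"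
  have ent: "(chi_entry lt m (Xs!i) (Ys!j) :: 'k fls) =
      of_int (incidence (Ys!j) (Xs!i)) * (aZ E lt m (Xs!i) / aZ E lt m (Ys!j))"
    if i: "i < length Xs" and j: "j < length Ys" for i j
  proof -
    have X: "simplex V E lt (Xs!i)" "card (Xs!i) = n + 1" using SX i by auto
    have Y: "simplex V E lt (Ys!j)" "card (Ys!j) = n" using SY j by auto
    show ?thesis using chi_entry_eq[OF G X(1) Y(1) _ aZ_nz[OF G NR Y(1)]] X(2) Y(2) by simp
  qed
  have "(minor_chi lt m Xs Ys :: 'k fls) = det (mat r r (\<lambda>(i,j).
      of_int (incidence (Ys!j) (Xs!i)) * (aZ E lt m (Xs!i) / aZ E lt m (Ys!j))))"
    unfolding minor_chi_def
    by (intro arg_cong[of _ _ det] cong_mat) (simp_all add: r_def len ent)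
  also have "\<dots> = (\<Prod>i<r. aZ E lt m (Xs!i)) / (\<Prod>j<r. aZ E lt m (Ys!j)) *
      det (mat r r (\<lambda>(i,j). of_int (incidence (Ys!j) (Xs!i)) :: 'k fls))"
    using det_scale[of r "\<lambda>i j. of_int (incidence (Ys!j) (Xs!i))" "\<lambda>i. aZ E lt m (Xs!i)" "\<lambda>j. aZ E lt m (Ys!j)"]
    by simp
  also have "det (mat r r (\<lambda>(i,j). of_int (incidence (Ys!j) (Xs!i)) :: 'k fls)) = fls_const (minor_flag Xs Ys)"
  proof -
    have "mat r r (\<lambda>(i,j). of_int (incidence (Ys!j) (Xs!i)) :: 'k fls) =
        map_mat fls_const (mat r r (\<lambda>(i,j). of_int (incidence (Ys!j) (Xs!i))))"
      by (rule eq_matI) (simp_all add: flsc.hom_of_int)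
    thus ?thesis unfolding minor_flag_def by (simp add: r_def len)
  qed
  also have "(\<Prod>i<r. aZ E lt m (Xs!i)) = (pL m Xs * qL E lt m Xs :: 'k fls)"
    unfolding pL_def qL_def prod_list_nth aZ_def r_def by (simp add: prod.distrib)
  also have "(\<Prod>j<r. aZ E lt m (Ys!j)) = (pL m Ys * qL E lt m Ys :: 'k fls)"
    unfolding pL_def qL_def prod_list_nth aZ_def r_def len by (simp add: prod.distrib)
  finally show ?thesis .
qed


lemma sum_set_nth: "distinct xs \<Longrightarrow> sum f (set xs) = (\<Sum>i<length xs. f (xs ! i))"
  by (simp add: sum.distinct_set_conv_list sum_list_sum_nth atLeast0LessThan)

lemma sum_nth_delta:
  assumes "distinct xs" "i < length xs"
  shows "(\<Sum>l<length xs. if xs ! l = xs ! i then g l else (0::'a::comm_monoid_add)) = g i"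
proof -
  have "(\<Sum>l<length xs. if xs ! l = xs ! i then g l else 0) = (\<Sum>l<length xs. if l = i then g l else 0)"
    using assms by (intro sum.cong) (auto simp: nth_eq_iff_index_eq)
  thus ?thesis using assms by simp
qed

lemma sum_nth_notin:
  assumes "x \<notin> set xs"
  shows "(\<Sum>l<length xs. if xs ! l = x then g l else (0::'a::comm_monoid_add)) = 0"
  using assms by (intro sum.neutral) auto

lemma NX_diff:
  assumes SX: "\<forall>X\<in>set Xs. simplex V E lt X \<and> card X = n + 1"
    and SY: "\<forall>Y\<in>set Ys. simplex V E lt Y \<and> card Y = n"
  shows "N_X V E lt n Xs - N_Yc V E lt n Ys = set Xs \<union> set Ys"
proof (intro equalityI subsetI)
  fix s assume "s \<in> N_X V E lt n Xs - N_Yc V E lt n Ys"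
  hence "simplex V E lt s" "card s \<le> n \<or> s \<in> set Xs" "\<not> (card s < n \<or> (card s = n \<and> s \<notin> set Ys))"
    unfolding N_X_def N_Yc_def by auto
  thus "s \<in> set Xs \<union> set Ys" by auto
next
  fix s assume "s \<in> set Xs \<union> set Ys"
  thus "s \<in> N_X V E lt n Xs - N_Yc V E lt n Ys"
  proof
    assume "s \<in> set Xs" thus ?thesis using SX unfolding N_X_def N_Yc_def by auto
  next
    assume "s \<in> set Ys" thus ?thesis using SY unfolding N_X_def N_Yc_def by auto
  qed
qed

lemma bd_formula:
  assumes SX: "\<forall>X\<in>set Xs. simplex V E lt X \<and> card X = n + 1"
    and SY: "\<forall>Y\<in>set Ys. simplex V E lt Y \<and> card Y = n"
    and dX: "distinct Xs"
  shows "rel_bd (N_X V E lt n Xs) (N_Yc V E lt n Ys) (Suc n) c \<tau> =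
     (if \<tau> \<in> set Ys then (\<Sum>i<length Xs. of_int (incidence \<tau> (Xs!i)) * c (Xs!i)) else (0::'k::field))"
proof -
  note D = NX_diff[OF SX SY]
  have cards: "\<tau> \<in> set Xs \<union> set Ys \<and> card \<tau> + 1 = Suc n \<longleftrightarrow> \<tau> \<in> set Ys"
    using SX SY by auto
  have S: "{\<sigma> \<in> set Xs \<union> set Ys. card \<sigma> = Suc n \<and> \<tau> \<subseteq> \<sigma>} = {\<sigma> \<in> set Xs. \<tau> \<subseteq> \<sigma>}"
    using SX SY by auto
  have "(\<Sum>\<sigma>\<in>{\<sigma> \<in> set Xs. \<tau> \<subseteq> \<sigma>}. of_int (incidence \<tau> \<sigma>) * c \<sigma>) =
        (\<Sum>\<sigma>\<in>set Xs. of_int (incidence \<tau> \<sigma>) * (c \<sigma> :: 'k))"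
    by (rule sum.mono_neutral_left) (auto simp: incidence_def)
  also have "\<dots> = (\<Sum>i<length Xs. of_int (incidence \<tau> (Xs!i)) * c (Xs!i))"
    by (rule sum_set_nth[OF dX])
  finally show ?thesis unfolding rel_bd_def D cards S by simp
qed

lemma rel_bd_zero: "rel_bd N L d (\<lambda>_. 0) = (\<lambda>_. (0::'k::field))"
  unfolding rel_bd_def by (rule ext) simp

lemma part_ii:
  fixes Xs Ys :: "'v::linorder set list"
  assumes SX: "\<forall>X\<in>set Xs. simplex V E lt X \<and> card X = n + 1"
    and SY: "\<forall>Y\<in>set Ys. simplex V E lt Y \<and> card Y = n"
    and dX: "distinct Xs" and dY: "distinct Ys"
    and lX: "length Xs = r" and lY: "length Ys = r"
  shows "(minor_flag Xs Ys :: 'k::field) \<noteq> 0 \<longleftrightarrow>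
          rel_acyclic TYPE('k) (N_X V E lt n Xs) (N_Yc V E lt n Ys)"
proof -
  define NX where "NX = N_X V E lt n Xs"
  define NY where "NY = N_Yc V E lt n Ys"
  note D = NX_diff[OF SX SY, folded NX_def NY_def]
  define A :: "'k mat" where "A = mat r r (\<lambda>(i,j). of_int (incidence (Ys!j) (Xs!i)))"
  have mf: "minor_flag Xs Ys = det A" unfolding minor_flag_def A_def lX lY ..
  have Ac: "A \<in> carrier_mat r r" unfolding A_def by simp
  have ATc: "transpose_mat A \<in> carrier_mat r r" unfolding A_def by simp
  have detT: "det (transpose_mat A) = det A" by (rule det_transpose[OF Ac])
  note bdf = bd_formula[OF SX SY dX, folded NX_def NY_def]
  have bdY: "rel_bd NX NY (Suc n) c (Ys!j) = (\<Sum>i<r. A $$ (i,j) * c (Xs!i))" if "j < r" for c :: "'v set \<Rightarrow> 'k" and j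
    using that lX lY unfolding bdf A_def by simp
  have bdnY: "rel_bd NX NY (Suc n) c \<tau> = 0" if "\<tau> \<notin> set Ys" for c :: "'v set \<Rightarrow> 'k" and \<tau>
    using that unfolding bdf by simp
  have ATv: "(transpose_mat A *\<^sub>v v) $ j = (\<Sum>i<r. A $$ (i,j) * v $ i)" if "j < r" "v \<in> carrier_vec r" for v j
    using that Ac by (auto simp: scalar_prod_def atLeast0LessThan intro!: sum.cong)
  show ?thesis
    unfolding NX_def[symmetric] NY_def[symmetric]
  proof
    assume nz: "(minor_flag Xs Ys :: 'k) \<noteq> 0"
    hence dA: "det A \<noteq> 0" using mf by simp
    show "rel_acyclic TYPE('k) NX NY"
      unfolding rel_acyclic_def
    proof (intro allI ballI impI)
      fix d and c :: "'v set \<Rightarrow> 'k"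
      assume cC: "c \<in> rel_chains NX NY d" and cz: "rel_bd NX NY d c = (\<lambda>_. 0)"
      have csupp: "c s \<noteq> 0 \<Longrightarrow> s \<in> set Xs \<union> set Ys \<and> card s = d" for s
        using cC unfolding rel_chains_def D by blast
      show "\<exists>b\<in>rel_chains NX NY (Suc d). rel_bd NX NY (Suc d) b = c"
      proof (cases "d = n")
        case True
        from det_non_zero_imp_unit[OF Ac dA, of "()"]
        obtain B where B: "B \<in> carrier_mat r r" and BA: "B * A = 1\<^sub>m r"
          unfolding Units_def ring_mat_def by auto
        define \<beta> where "\<beta> i = (\<Sum>l<r. c (Ys!l) * B $$ (l,i))" for i
        define b where "b s = (\<Sum>i<r. if Xs!i = s then \<beta> i else 0)" for s
        have bX: "b (Xs!i) = \<beta> i" if "i < r" for i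
          unfolding b_def using sum_nth_delta[OF dX, of i \<beta>] that lX by simp
        have bn: "b s = 0" if "s \<notin> set Xs" for s
          unfolding b_def using sum_nth_notin[OF that, of \<beta>] lX by simp
        have "b \<in> rel_chains NX NY (Suc d)"
          unfolding rel_chains_def D using bn SX True by auto
        moreover have "rel_bd NX NY (Suc d) b = c"
        proof
          fix \<tau>
          show "rel_bd NX NY (Suc d) b \<tau> = c \<tau>"
          proof (cases "\<tau> \<in> set Ys")
            case False
            have "c \<tau> = 0"
            proof (rule ccontr)
              assume "c \<tau> \<noteq> 0"
              from csupp[OF this] False SX True show False by auto
            qed
            thus ?thesis using bdnY[OF False] True by simp
          next
            case True': True
            then obtain j where j: "j < r" "\<tau> = Ys!j" using lY by (auto simp: in_set_conv_nth)
            have "rel_bd NX NY (Suc d) b \<tau> = (\<Sum>i<r. A $$ (i,j) * \<beta> i)"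
              unfolding j(2) True using bdY[OF j(1)] bX by simp
            also have "\<dots> = (\<Sum>i<r. \<Sum>l<r. c (Ys!l) * (B $$ (l,i) * A $$ (i,j)))"
              unfolding \<beta>_def by (simp add: sum_distrib_left mult_ac)
            also have "\<dots> = (\<Sum>l<r. \<Sum>i<r. c (Ys!l) * (B $$ (l,i) * A $$ (i,j)))"
              by (rule sum.swap)
            also have "\<dots> = (\<Sum>l<r. c (Ys!l) * (\<Sum>i<r. B $$ (l,i) * A $$ (i,j)))"
              by (simp add: sum_distrib_left)
            also have "\<dots> = (\<Sum>l<r. c (Ys!l) * (if l = j then 1 else 0))"
            proof (rule sum.cong[OF HOL.refl])
              fix l assume l: "l \<in> {..<r}"
              have "(B * A) $$ (l, j) = (\<Sum>i<r. B $$ (l,i) * A $$ (i,j))"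
                using B Ac l j by (auto simp: scalar_prod_def atLeast0LessThan intro!: sum.cong)
              thus "c (Ys!l) * (\<Sum>i<r. B $$ (l,i) * A $$ (i,j)) = c (Ys!l) * (if l = j then 1 else 0)"
                unfolding BA using l j by simp
            qed
            also have "\<dots> = (\<Sum>l<r. if l = j then c (Ys!l) else 0)"
              by (intro sum.cong) auto
            also have "\<dots> = c \<tau>" using j by simp
            finally show ?thesis .
          qed
        qed
        ultimately show ?thesis by blast
      next
        case False
        have c0: "c = (\<lambda>_. 0)"
        proof (cases "d = Suc n")
          case False': False
          show ?thesis
          proof
            fix s show "c s = 0"
            proof (rule ccontr)
              assume "c s \<noteq> 0"
              from csupp[OF this] SX SY False False' show False by auto
            qed
          qed
        next
          case True
          define v where "v = vec r (\<lambda>i. c (Xs!i))"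
          have vc: "v \<in> carrier_vec r" unfolding v_def by simp
          have "transpose_mat A *\<^sub>v v = 0\<^sub>v r"
          proof (rule eq_vecI)
            fix j assume "j < dim_vec (0\<^sub>v r :: 'k vec)"
            hence j: "j < r" by simp
            have "(transpose_mat A *\<^sub>v v) $ j = rel_bd NX NY (Suc n) c (Ys!j)"
              unfolding ATv[OF j vc] bdY[OF j] by (simp add: v_def)
            also have "\<dots> = 0" using cz True by simp
            finally show "(transpose_mat A *\<^sub>v v) $ j = 0\<^sub>v r $ j" using j by simp
          qed (use Ac in simp)
          hence v0: "v = 0\<^sub>v r"
          proof -
            assume Av0: "transpose_mat A *\<^sub>v v = 0\<^sub>v r"
            show ?thesis
            proof (rule ccontr)
              assume "v \<noteq> 0\<^sub>v r"
              hence "\<exists>v. v \<in> carrier_vec r \<and> v \<noteq> 0\<^sub>v r \<and> transpose_mat A *\<^sub>v v = 0\<^sub>v r"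
                using vc Av0 by blast
              hence "det (transpose_mat A) = 0" using det_0_iff_vec_prod_zero[OF ATc] by simp
              thus False using detT dA by simp
            qed
          qed
          show ?thesis
          proof
            fix s show "c s = 0"
            proof (rule ccontr)
              assume cs: "c s \<noteq> 0"
              from csupp[OF this] SY True have "s \<in> set Xs" by auto
              then obtain i where i: "i < r" "s = Xs!i" using lX by (auto simp: in_set_conv_nth)
              have "v $ i = c s" unfolding v_def using i by simp
              thus False using v0 i cs by simp
            qed
          qed
        qed
        have "(\<lambda>_. 0) \<in> rel_chains NX NY (Suc d)" unfolding rel_chains_def by simp
        moreover have "rel_bd NX NY (Suc d) (\<lambda>_. 0) = c" unfolding c0 by (rule rel_bd_zero)
        ultimately show ?thesis by blast
      qed
    qed
  next
    assume ac: "rel_acyclic TYPE('k) NX NY"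
    show "(minor_flag Xs Ys :: 'k) \<noteq> 0"
    proof
      assume "(minor_flag Xs Ys :: 'k) = 0"
      hence "det (transpose_mat A) = 0" using mf detT by simp
      then obtain v where vc: "v \<in> carrier_vec r" and vnz: "v \<noteq> 0\<^sub>v r" and Av: "transpose_mat A *\<^sub>v v = 0\<^sub>v r"
        using det_0_iff_vec_prod_zero[OF ATc] by blast
      define c :: "'v set \<Rightarrow> 'k" where "c s = (\<Sum>i<r. if Xs!i = s then v $ i else 0)" for s
      have cX: "c (Xs!i) = v $ i" if "i < r" for i
        unfolding c_def using sum_nth_delta[OF dX, of i "\<lambda>i. v $ i"] that lX by simp
      have cn: "c s = 0" if "s \<notin> set Xs" for s
        unfolding c_def using sum_nth_notin[OF that, of "\<lambda>i. v $ i"] lX by simp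
      have cC: "c \<in> rel_chains NX NY (Suc n)"
        unfolding rel_chains_def D using cn SX by auto
      have cz: "rel_bd NX NY (Suc n) c = (\<lambda>_. 0)"
      proof
        fix \<tau> show "rel_bd NX NY (Suc n) c \<tau> = 0"
        proof (cases "\<tau> \<in> set Ys")
          case False thus ?thesis by (rule bdnY)
        next
          case True
          then obtain j where j: "j < r" "\<tau> = Ys!j" using lY by (auto simp: in_set_conv_nth)
          have "rel_bd NX NY (Suc n) c \<tau> = (transpose_mat A *\<^sub>v v) $ j"
            unfolding j(2) bdY[OF j(1)] ATv[OF j(1) vc] using cX by simp
          thus ?thesis using Av j by simp
        qed
      qed
      from ac[unfolded rel_acyclic_def] cC cz
      obtain b where bC: "b \<in> rel_chains NX NY (Suc (Suc n))" and bb: "rel_bd NX NY (Suc (Suc n)) b = c"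
        by blast
      have b0: "b = (\<lambda>_. 0)"
      proof
        fix s show "b s = 0"
        proof (rule ccontr)
          assume "b s \<noteq> 0"
          hence "s \<in> set Xs \<union> set Ys \<and> card s = Suc (Suc n)" using bC unfolding rel_chains_def D by blast
          thus False using SX SY by auto
        qed
      qed
      have "c = (\<lambda>_. 0)" using bb unfolding b0 rel_bd_zero by simp
      hence "v = 0\<^sub>v r"
        using cX vc by (intro eq_vecI) auto
      thus False using vnz by simp
    qed
  qed
qed



context vector_space begin

lemma indep_list:
  assumes d: "distinct ws" and ind: "independent (set ws)"
    and s: "(\<Sum>i<length ws. c i *s (ws ! i)) = 0" and i: "i < length ws"
  shows "c i = 0"
proof -
  define u where "u w = c (THE l. l < length ws \<and> ws ! l = w)" for w
  have uw: "u (ws ! l) = c l" if "l < length ws" for l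
  proof -
    have "(THE l'. l' < length ws \<and> ws ! l' = ws ! l) = l"
      using that d by (auto simp: nth_eq_iff_index_eq)
    thus ?thesis unfolding u_def by simp
  qed
  have "(\<Sum>w\<in>set ws. u w *s w) = (\<Sum>l<length ws. u (ws ! l) *s (ws ! l))"
    by (rule sum_set_nth[OF d])
  also have "\<dots> = (\<Sum>l<length ws. c l *s (ws ! l))" by (intro sum.cong) (auto simp: uw)
  finally have "(\<Sum>w\<in>set ws. u w *s w) = 0" using s by simp
  hence "u (ws ! i) = 0"
    using ind[unfolded independent_explicit_finite_subsets] i by auto
  thus ?thesis using uw[OF i] by simp
qed

lemma dep_list:
  assumes "\<not> (distinct ws \<and> independent (set ws))"
  shows "\<exists>c i0. i0 < length ws \<and> c i0 \<noteq> 0 \<and> (\<Sum>i<length ws. c i *s (ws ! i)) = 0"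
proof (cases "distinct ws")
  case False
  then obtain i j where ij: "i < length ws" "j < length ws" "i \<noteq> j" "ws ! i = ws ! j"
    by (auto simp: distinct_conv_nth)
  define c where "c l = (if l = i then 1 else if l = j then -1 else (0::'a))" for l
  have t: "c l *s (ws ! l) = (if l = i then ws ! i else 0) + (if l = j then - (ws ! j) else 0)" for l
    unfolding c_def using ij by auto
  have "(\<Sum>l<length ws. c l *s (ws ! l)) = ws ! i - ws ! j"
    unfolding t sum.distrib using ij by simp
  hence "(\<Sum>l<length ws. c l *s (ws ! l)) = 0" using ij by simp
  moreover have "c i \<noteq> 0" unfolding c_def by simp
  ultimately show ?thesis using ij by blast
next
  case True
  hence "dependent (set ws)" using assms by blast
  then obtain t u where t: "finite t" "t \<subseteq> set ws" "(\<Sum>v\<in>t. u v *s v) = 0" and v: "\<exists>v\<in>t. u v \<noteq> 0"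
    unfolding dependent_explicit by blast
  define c where "c l = (if ws ! l \<in> t then u (ws ! l) else 0)" for l
  have "(\<Sum>l<length ws. c l *s (ws ! l)) = (\<Sum>w\<in>set ws. (if w \<in> t then u w else 0) *s w)"
    unfolding sum_set_nth[OF True] c_def by simp
  also have "\<dots> = (\<Sum>w\<in>set ws. if w \<in> t then u w *s w else 0)"
    by (intro sum.cong) auto
  also have "\<dots> = (\<Sum>w\<in>t. u w *s w)"
  proof -
    have e: "{w. w \<in> set ws \<and> w \<in> t} = t" using t(2) by blast
    show ?thesis by (simp add: sum.inter_filter[symmetric] e)
  qed
  finally have s: "(\<Sum>l<length ws. c l *s (ws ! l)) = 0" using t(3) by simp
  from v obtain w where w: "w \<in> t" "u w \<noteq> 0" by blast
  hence "w \<in> set ws" using t(2) by blast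
  then obtain i0 where i0: "i0 < length ws" "ws ! i0 = w" by (auto simp: in_set_conv_nth)
  have "c i0 \<noteq> 0" unfolding c_def using i0 w by simp
  thus ?thesis using s i0 by blast
qed

end

lemma vs_fun: "vector_space (fun_scale :: 'k::field \<Rightarrow> ('a \<Rightarrow> 'k) \<Rightarrow> ('a \<Rightarrow> 'k))"
  by unfold_locales (simp_all add: fun_scale_def fun_eq_iff algebra_simps)

lemma sum_fun_apply: "(sum F S) y = (\<Sum>s\<in>S. F s y)"
  by (induct S rule: infinite_finite_induct) auto

lemma minor_indep:
  fixes f :: "'r \<Rightarrow> 'c \<Rightarrow> 'k::field"
  assumes len: "length ys = length xs"
    and dt: "det (mat (length xs) (length xs) (\<lambda>(i,j). f (xs!i) (ys!j))) \<noteq> 0"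
  shows "distinct (map f xs) \<and> \<not> module.dependent (fun_scale :: 'k \<Rightarrow> ('c \<Rightarrow> 'k) \<Rightarrow> _) (set (map f xs))"
proof (rule ccontr)
  interpret vs: vector_space "fun_scale :: 'k \<Rightarrow> ('c \<Rightarrow> 'k) \<Rightarrow> ('c \<Rightarrow> 'k)" by (rule vs_fun)
  assume "\<not> (distinct (map f xs) \<and> vs.independent (set (map f xs)))"
  from vs.dep_list[OF this] obtain c i0 where c: "i0 < length xs" "c i0 \<noteq> 0"
    and s: "(\<Sum>i<length xs. fun_scale (c i) (map f xs ! i)) = 0" by auto
  define k where "k = length xs"
  define M where "M = mat k k (\<lambda>(i,j). f (xs!i) (ys!j))"
  have Mc: "M \<in> carrier_mat k k" unfolding M_def by simp
  define v where "v = vec k c"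
  have "transpose_mat M *\<^sub>v v = 0\<^sub>v k"
  proof (rule eq_vecI)
    fix j assume "j < dim_vec (0\<^sub>v k :: 'k vec)"
    hence j: "j < k" by simp
    have "(transpose_mat M *\<^sub>v v) $ j = (\<Sum>i<k. c i * f (xs!i) (ys!j))"
      using j Mc unfolding M_def v_def by (auto simp: scalar_prod_def atLeast0LessThan mult.commute intro!: sum.cong)
    also have "\<dots> = (\<Sum>i<length xs. fun_scale (c i) (map f xs ! i)) (ys!j)"
      unfolding sum_fun_apply fun_scale_def k_def by (intro sum.cong) auto
    also have "\<dots> = 0" using s by simp
    finally show "(transpose_mat M *\<^sub>v v) $ j = 0\<^sub>v k $ j" using j by simp
  qed (use Mc in simp)
  moreover have "v \<noteq> 0\<^sub>v k"
  proof
    assume "v = 0\<^sub>v k"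
    hence "v $ i0 = 0" using c k_def by simp
    thus False using c unfolding v_def k_def by simp
  qed
  moreover have "v \<in> carrier_vec k" unfolding v_def by simp
  ultimately have "det (transpose_mat M) = 0"
    using det_0_iff_vec_prod_zero[of "transpose_mat M" k] Mc by auto
  hence "det M = 0" using det_transpose[OF Mc] by simp
  thus False using dt unfolding M_def k_def by simp
qed


lemma det_mat0: "det (mat 0 0 g) = (1::'a::comm_ring_1)"
proof -
  have "mat 0 0 g = (1\<^sub>m 0 :: 'a mat)" by (rule eq_matI) auto
  thus ?thesis by simp
qed

lemma indep_minor:
  fixes f :: "'r \<Rightarrow> 'c \<Rightarrow> 'k::field"
  assumes supp: "\<And>x y. y \<notin> C \<Longrightarrow> f x y = 0"
  shows "distinct (map f xs) \<Longrightarrow> \<not> module.dependent (fun_scale :: 'k \<Rightarrow> ('c \<Rightarrow> 'k) \<Rightarrow> _) (set (map f xs)) \<Longrightarrow>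
    \<exists>ys. distinct ys \<and> set ys \<subseteq> C \<and> length ys = length xs \<and>
      det (mat (length xs) (length xs) (\<lambda>(i,j). f (xs!i) (ys!j))) \<noteq> 0"
proof (induction xs)
  case Nil
  show ?case by (rule exI[of _ "[]"]) (simp add: det_mat0)
next
  case (Cons x xs)
  interpret vs: vector_space "fun_scale :: 'k \<Rightarrow> ('c \<Rightarrow> 'k) \<Rightarrow> ('c \<Rightarrow> 'k)" by (rule vs_fun)
  have d': "distinct (map f xs)" using Cons.prems(1) by simp
  have ind': "\<not> vs.dependent (set (map f xs))"
    using Cons.prems(2) vs.dependent_mono[of "set (map f xs)" "set (map f (x # xs))"] by auto
  from Cons.IH[OF d' ind'] obtain ys' where ys': "distinct ys'" "set ys' \<subseteq> C" "length ys' = length xs"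
    and dt: "det (mat (length xs) (length xs) (\<lambda>(i,j). f (xs!i) (ys'!j))) \<noteq> 0" by blast
  define k where "k = length xs"
  define D where "D i = mat k k (\<lambda>(i',j'). f ((x#xs)!(if i' < i then i' else Suc i')) (ys'!j'))" for i
  define cc where "cc i = (-1)^i * det (D i)" for i
  define M where "M y = mat (Suc k) (Suc k) (\<lambda>(i,j). f ((x#xs)!i) ((y#ys')!j))" for y
  have Mc: "M y \<in> carrier_mat (Suc k) (Suc k)" for y unfolding M_def by simp
  have lap: "det (M y) = (\<Sum>i<Suc k. f ((x#xs)!i) y * cc i)" for y
  proof -
    have "det (M y) = (\<Sum>i<Suc k. M y $$ (i,0) * cofactor (M y) i 0)"
      by (rule laplace_expansion_column[OF Mc]) simp
    also have "\<dots> = (\<Sum>i<Suc k. f ((x#xs)!i) y * cc i)"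
    proof (rule sum.cong[OF HOL.refl])
      fix i assume i: "i \<in> {..<Suc k}"
      have "mat_delete (M y) i 0 = D i"
        unfolding mat_delete_def D_def
        by (rule cong_mat) (auto simp: M_def)
      thus "M y $$ (i,0) * cofactor (M y) i 0 = f ((x#xs)!i) y * cc i"
        using i unfolding cofactor_def cc_def by (simp add: M_def)
    qed
    finally show ?thesis .
  qed
  show ?case
  proof (rule ccontr)
    assume none: "\<not> ?case"
    have z: "(\<Sum>i<Suc k. f ((x#xs)!i) y * cc i) = 0" for y
    proof (cases "y \<in> C")
      case False
      thus ?thesis using supp by simp
    next
      case True
      show ?thesis
      proof (cases "y \<in> set ys'")
        case False
        have "det (M y) = 0"
        proof (rule ccontr)
          assume "det (M y) \<noteq> 0"
          hence "distinct (y#ys') \<and> set (y#ys') \<subseteq> C \<and> length (y#ys') = length (x#xs) \<and>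
            det (mat (length (x#xs)) (length (x#xs)) (\<lambda>(i,j). f ((x#xs)!i) ((y#ys')!j))) \<noteq> 0"
            using False True ys' unfolding M_def k_def by simp
          thus False using none by blast
        qed
        thus ?thesis using lap by simp
      next
        case True': True
        then obtain j0 where j0: "j0 < k" "y = ys'!j0" using ys'(3) k_def by (auto simp: in_set_conv_nth)
        have "col (M y) 0 = col (M y) (Suc j0)"
          by (rule eq_vecI) (use j0 in \<open>simp_all add: M_def\<close>)
        hence "det (M y) = 0" using det_identical_columns[OF Mc, of 0 "Suc j0"] j0 by simp
        thus ?thesis using lap by simp
      qed
    qed
    have "(\<Sum>i<length (map f (x#xs)). fun_scale (cc i) (map f (x#xs) ! i)) = 0"
    proof
      fix y
      have "(\<Sum>i<length (map f (x#xs)). fun_scale (cc i) (map f (x#xs) ! i)) y =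
            (\<Sum>i<Suc k. f ((x#xs)!i) y * cc i)"
        unfolding sum_fun_apply fun_scale_def k_def by (intro sum.cong) (auto simp: mult.commute nth_Cons')
      thus "(\<Sum>i<length (map f (x#xs)). fun_scale (cc i) (map f (x#xs) ! i)) y = 0 y"
        using z by simp
    qed
    from vs.indep_list[OF Cons.prems(1) Cons.prems(2) this] have "cc 0 = 0" by simp
    moreover have "D 0 = mat (length xs) (length xs) (\<lambda>(i,j). f (xs!i) (ys'!j))"
      unfolding D_def k_def by (rule cong_mat) auto
    ultimately show False using dt unfolding cc_def by simp
  qed
qed


lemma rank_part:
  fixes V :: "'v::linorder set" and E :: "'v set set" and lt :: "'v set \<Rightarrow> nat"
  assumes G: "labelled_graph V E lt"
  shows "(\<exists>Xs' Ys'. length Xs' = rank_bd TYPE('k::field) V E lt (n + 1) \<and> length Ys' = length Xs' \<and>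
            distinct Xs' \<and> (\<forall>X\<in>set Xs'. simplex V E lt X \<and> card X = n + 1) \<and>
            distinct Ys' \<and> (\<forall>Y\<in>set Ys'. simplex V E lt Y \<and> card Y = n) \<and>
            (minor_flag Xs' Ys' :: 'k) \<noteq> 0) \<and>
         (\<forall>Xs' Ys'. length Ys' = length Xs' \<and> length Xs' > rank_bd TYPE('k) V E lt (n + 1) \<and>
            distinct Xs' \<and> (\<forall>X\<in>set Xs'. simplex V E lt X \<and> card X = n + 1) \<and>
            distinct Ys' \<and> (\<forall>Y\<in>set Ys'. simplex V E lt Y \<and> card Y = n) \<longrightarrow>
            (minor_flag Xs' Ys' :: 'k) = 0)"
proof -
  interpret vs: vector_space "fun_scale :: 'k \<Rightarrow> ('v set \<Rightarrow> 'k) \<Rightarrow> ('v set \<Rightarrow> 'k)" by (rule vs_fun)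
  define S1 where "S1 = {\<sigma>. simplex V E lt \<sigma> \<and> card \<sigma> = n + 1}"
  define S0 where "S0 = {\<sigma>. simplex V E lt \<sigma> \<and> card \<sigma> = n}"
  define rowf :: "'v set \<Rightarrow> 'v set \<Rightarrow> 'k" where
    "rowf \<sigma> \<tau> = (if \<tau> \<in> S0 then of_int (incidence \<tau> \<sigma>) else 0)" for \<sigma> \<tau>
  define Im where "Im = flag_bd V E lt (n+1) ` (flag_chains V E lt (n+1) :: ('v set \<Rightarrow> 'k) set)"
  have rk: "rank_bd TYPE('k) V E lt (n+1) = vs.dim Im" unfolding rank_bd_def Im_def ..
  have finS: "finite {\<sigma>. simplex V E lt \<sigma>}"
  proof (rule finite_subset[of _ "Pow V"])
    show "{\<sigma>. simplex V E lt \<sigma>} \<subseteq> Pow V" unfolding simplex_def clique_def by blast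
    show "finite (Pow V)" using G unfolding labelled_graph_def by simp
  qed
  have fS1: "finite S1" unfolding S1_def by (rule finite_subset[OF _ finS]) blast
  have supp: "rowf x y = 0" if "y \<notin> S0" for x y using that unfolding rowf_def by simp
  have bdf: "flag_bd V E lt (n+1) c = (\<lambda>\<tau>. \<Sum>\<sigma>\<in>S1. c \<sigma> * rowf \<sigma> \<tau>)" for c :: "'v set \<Rightarrow> 'k"
  proof
    fix \<tau>
    show "flag_bd V E lt (n+1) c \<tau> = (\<Sum>\<sigma>\<in>S1. c \<sigma> * rowf \<sigma> \<tau>)"
    proof (cases "\<tau> \<in> S0")
      case True
      have e: "{\<sigma> \<in> Collect (simplex V E lt) - {}. card \<sigma> = n + 1 \<and> \<tau> \<subseteq> \<sigma>} = {\<sigma>\<in>S1. \<tau> \<subseteq> \<sigma>}"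
        unfolding S1_def by auto
      have "flag_bd V E lt (n+1) c \<tau> = (\<Sum>\<sigma>\<in>{\<sigma>\<in>S1. \<tau> \<subseteq> \<sigma>}. of_int (incidence \<tau> \<sigma>) * c \<sigma>)"
        unfolding flag_bd_def rel_bd_def e using True unfolding S0_def by simp
      also have "\<dots> = (\<Sum>\<sigma>\<in>S1. of_int (incidence \<tau> \<sigma>) * c \<sigma>)"
        by (rule sum.mono_neutral_left) (auto simp: fS1 incidence_def)
      also have "\<dots> = (\<Sum>\<sigma>\<in>S1. c \<sigma> * rowf \<sigma> \<tau>)"
        unfolding rowf_def using True by (simp add: mult.commute)
      finally show ?thesis .
    next
      case False
      have "flag_bd V E lt (n+1) c \<tau> = 0"
        unfolding flag_bd_def rel_bd_def using False unfolding S0_def by auto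
      thus ?thesis using supp[OF False] by simp
    qed
  qed
  have bdsum: "flag_bd V E lt (n+1) c = (\<Sum>\<sigma>\<in>S1. fun_scale (c \<sigma>) (rowf \<sigma>))" for c :: "'v set \<Rightarrow> 'k"
    unfolding bdf by (rule ext) (simp add: sum_fun_apply fun_scale_def)
  have W0sub: "rowf ` S1 \<subseteq> Im"
  proof
    fix w assume "w \<in> rowf ` S1"
    then obtain \<sigma> where \<sigma>: "\<sigma> \<in> S1" "w = rowf \<sigma>" by blast
    define \<delta> :: "'v set \<Rightarrow> 'k" where "\<delta> s = (if s = \<sigma> then 1 else 0)" for s
    have "\<delta> \<in> flag_chains V E lt (n+1)"
      unfolding flag_chains_def \<delta>_def using \<sigma>(1) unfolding S1_def by auto
    moreover have "flag_bd V E lt (n+1) \<delta> = rowf \<sigma>"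
      unfolding bdf
    proof
      fix \<tau>
      have "(\<Sum>s\<in>S1. \<delta> s * rowf s \<tau>) = (\<Sum>s\<in>S1. if s = \<sigma> then rowf s \<tau> else 0)"
        unfolding \<delta>_def by (intro sum.cong) auto
      also have "\<dots> = rowf \<sigma> \<tau>" using \<sigma>(1) fS1 by simp
      finally show "(\<Sum>s\<in>S1. \<delta> s * rowf s \<tau>) = rowf \<sigma> \<tau>" .
    qed
    ultimately show "w \<in> Im" unfolding Im_def \<sigma>(2) by (metis image_eqI)
  qed
  have Imsub: "Im \<subseteq> vs.span (rowf ` S1)"
  proof
    fix w assume "w \<in> Im"
    then obtain c where "w = flag_bd V E lt (n+1) c" unfolding Im_def by blast
    hence w: "w = (\<Sum>\<sigma>\<in>S1. fun_scale (c \<sigma>) (rowf \<sigma>))" using bdsum by simp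
    show "w \<in> vs.span (rowf ` S1)" unfolding w
      by (intro vs.span_sum vs.span_scale vs.span_base) auto
  qed
  obtain B where B: "B \<subseteq> rowf ` S1" "vs.independent B" "rowf ` S1 \<subseteq> vs.span B"
      "card B = vs.dim (rowf ` S1)"
    by (rule vs.basis_exists)
  have fB: "finite B" using B(1) fS1 by (meson finite_imageI finite_subset)
  have spanB: "vs.span (rowf ` S1) \<subseteq> vs.span B"
    using vs.span_minimal[OF B(3) vs.subspace_span] .
  have dimIm: "vs.dim Im = card B"
    by (rule vs.dim_unique[of B]) (use B W0sub Imsub spanB in auto)
  have mf: "(minor_flag Xs Ys :: 'k) = det (mat (length Xs) (length Xs) (\<lambda>(i,j). rowf (Xs!i) (Ys!j)))"
    if "length Ys = length Xs" "set Ys \<subseteq> S0" for Xs Ys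
    unfolding minor_flag_def rowf_def using that
    by (intro arg_cong[of _ _ det] cong_mat) (auto, metis nth_mem subsetD)
  show ?thesis
  proof
    obtain bs where bs: "distinct bs" "set bs = B" using finite_distinct_list[OF fB] by blast
    define g where "g w = (SOME \<sigma>. \<sigma> \<in> S1 \<and> rowf \<sigma> = w)" for w
    have g: "g w \<in> S1 \<and> rowf (g w) = w" if "w \<in> B" for w
    proof -
      have "\<exists>\<sigma>. \<sigma> \<in> S1 \<and> rowf \<sigma> = w" using that B(1) by blast
      thus ?thesis unfolding g_def by (rule someI_ex)
    qed
    define xs where "xs = map g bs"
    have mx: "map rowf xs = bs" unfolding xs_def map_map
      by (rule map_idI) (use g bs(2) in auto)
    have dm: "distinct (map rowf xs)" using mx bs(1) by simp
    have im: "vs.independent (set (map rowf xs))" using mx bs(2) B(2) by simp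
    from indep_minor[of S0 rowf xs, OF supp dm im]
    obtain ys where ys: "distinct ys" "set ys \<subseteq> S0" "length ys = length xs"
        "det (mat (length xs) (length xs) (\<lambda>(i,j). rowf (xs!i) (ys!j))) \<noteq> 0"
      by auto
    have lx: "length xs = rank_bd TYPE('k) V E lt (n + 1)"
      unfolding rk dimIm xs_def using bs distinct_card[OF bs(1)] by simp
    have dx: "distinct xs" using bs(1) mx by (metis distinct_map)
    have sx: "\<forall>X\<in>set xs. simplex V E lt X \<and> card X = n + 1"
      using g bs(2) unfolding xs_def S1_def by auto
    have sy: "\<forall>Y\<in>set ys. simplex V E lt Y \<and> card Y = n" using ys(2) unfolding S0_def by auto
    have "(minor_flag xs ys :: 'k) \<noteq> 0" using mf[OF ys(3) ys(2)] ys(4) by simp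
    thus "\<exists>Xs' Ys'. length Xs' = rank_bd TYPE('k) V E lt (n + 1) \<and> length Ys' = length Xs' \<and>
            distinct Xs' \<and> (\<forall>X\<in>set Xs'. simplex V E lt X \<and> card X = n + 1) \<and>
            distinct Ys' \<and> (\<forall>Y\<in>set Ys'. simplex V E lt Y \<and> card Y = n) \<and>
            (minor_flag Xs' Ys' :: 'k) \<noteq> 0"
      using lx ys(1,3) dx sx sy by blast
  next
    show "\<forall>Xs' Ys'. length Ys' = length Xs' \<and> length Xs' > rank_bd TYPE('k) V E lt (n + 1) \<and>
            distinct Xs' \<and> (\<forall>X\<in>set Xs'. simplex V E lt X \<and> card X = n + 1) \<and>
            distinct Ys' \<and> (\<forall>Y\<in>set Ys'. simplex V E lt Y \<and> card Y = n) \<longrightarrow>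
            (minor_flag Xs' Ys' :: 'k) = 0"
    proof (intro allI impI)
      fix Xs' Ys' :: "'v set list"
      assume H: "length Ys' = length Xs' \<and> length Xs' > rank_bd TYPE('k) V E lt (n + 1) \<and>
            distinct Xs' \<and> (\<forall>X\<in>set Xs'. simplex V E lt X \<and> card X = n + 1) \<and>
            distinct Ys' \<and> (\<forall>Y\<in>set Ys'. simplex V E lt Y \<and> card Y = n)"
      show "(minor_flag Xs' Ys' :: 'k) = 0"
      proof (rule ccontr)
        assume nz: "(minor_flag Xs' Ys' :: 'k) \<noteq> 0"
        have sY: "set Ys' \<subseteq> S0" using H unfolding S0_def by auto
        have sX: "set Xs' \<subseteq> S1" using H unfolding S1_def by auto
        have "det (mat (length Xs') (length Xs') (\<lambda>(i,j). rowf (Xs'!i) (Ys'!j))) \<noteq> 0"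
          using nz mf[OF _ sY] H by simp
        from minor_indep[OF _ this] H
        have di: "distinct (map rowf Xs')" "vs.independent (set (map rowf Xs'))" by auto
        have "set (map rowf Xs') \<subseteq> vs.span B" using sX B(3) by auto
        from vs.independent_span_bound[OF fB di(2) this]
        have "card (set (map rowf Xs')) \<le> card B" by simp
        hence "length Xs' \<le> card B" using distinct_card[OF di(1)] by simp
        thus False using H rk dimIm by simp
      qed
    qed
  qed
qed

lemma pq_prod: "pL m Xs * qL E lt m Xs = (prod_list (map (aZ E lt m) Xs) :: 'k::field fls)"
  by (induct Xs) (simp_all add: pL_def qL_def aZ_def mult_ac)

lemma pq_nz:
  assumes G: "labelled_graph V E lt" and NR: "non_resonant TYPE('k::field) V E lt m"
    and S: "\<forall>X\<in>set Xs. simplex V E lt X"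
  shows "(pL m Xs * qL E lt m Xs :: 'k fls) \<noteq> 0"
  unfolding pq_prod prod_list_zero_iff using aZ_nz[OF G NR] S by auto

lemma chi_nz_iff:
  assumes G: "labelled_graph V E lt" and NR: "non_resonant TYPE('k::field) V E lt m"
    and SX: "\<forall>X\<in>set Xs. simplex V E lt X \<and> card X = n + 1"
    and SY: "\<forall>Y\<in>set Ys. simplex V E lt Y \<and> card Y = n"
    and len: "length Ys = length Xs"
  shows "(minor_chi lt m Xs Ys :: 'k fls) \<noteq> 0 \<longleftrightarrow> (minor_flag Xs Ys :: 'k) \<noteq> 0"
proof -
  have a: "(pL m Xs * qL E lt m Xs :: 'k fls) \<noteq> 0" using pq_nz[OF G NR] SX by auto
  have b: "(pL m Ys * qL E lt m Ys :: 'k fls) \<noteq> 0" using pq_nz[OF G NR] SY by auto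
  show ?thesis unfolding part_i[OF G NR SX SY len] using a b by simp
qed

theorem proposition3p8:
  fixes V :: "'v::linorder set" and E :: "'v set set" and lt :: "'v set \<Rightarrow> nat"
    and m :: "'v \<Rightarrow> int" and n r :: nat and Xs Ys :: "'v set list"
  assumes graph: "labelled_graph V E lt"
    and FC: "FC_type V E lt"
    and surj: "chi_surjective V m"
    and nonres: "non_resonant TYPE('k::field) V E lt m"
    and Xs: "length Xs = r" "distinct Xs" "\<forall>X\<in>set Xs. simplex V E lt X \<and> card X = n + 1"
    and Ys: "length Ys = r" "distinct Ys" "\<forall>Y\<in>set Ys. simplex V E lt Y \<and> card Y = n"
  shows "((minor_chi lt m Xs Ys :: 'k fls) =
           (pL m Xs * qL E lt m Xs) / (pL m Ys * qL E lt m Ys) * fls_const (minor_flag Xs Ys)) \<and>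
         ((minor_chi lt m Xs Ys :: 'k fls) \<noteq> 0 \<longleftrightarrow> acyclic_pair TYPE('k) V E lt n Xs Ys r) \<and>
         (\<exists>Xs' Ys'. length Xs' = rank_bd TYPE('k) V E lt (n + 1) \<and> length Ys' = length Xs' \<and>
            distinct Xs' \<and> (\<forall>X\<in>set Xs'. simplex V E lt X \<and> card X = n + 1) \<and>
            distinct Ys' \<and> (\<forall>Y\<in>set Ys'. simplex V E lt Y \<and> card Y = n) \<and>
            (minor_chi lt m Xs' Ys' :: 'k fls) \<noteq> 0) \<and>
         (\<forall>Xs' Ys'. length Ys' = length Xs' \<and> length Xs' > rank_bd TYPE('k) V E lt (n + 1) \<and>
            distinct Xs' \<and> (\<forall>X\<in>set Xs'. simplex V E lt X \<and> card X = n + 1) \<and>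
            distinct Ys' \<and> (\<forall>Y\<in>set Ys'. simplex V E lt Y \<and> card Y = n) \<longrightarrow>
            (minor_chi lt m Xs' Ys' :: 'k fls) = 0)"
proof (intro conjI)
  have len: "length Ys = length Xs" using Xs(1) Ys(1) by simp
  show "(minor_chi lt m Xs Ys :: 'k fls) =
           (pL m Xs * qL E lt m Xs) / (pL m Ys * qL E lt m Ys) * fls_const (minor_flag Xs Ys)"
    by (rule part_i[OF graph nonres Xs(3) Ys(3) len])
  show "(minor_chi lt m Xs Ys :: 'k fls) \<noteq> 0 \<longleftrightarrow> acyclic_pair TYPE('k) V E lt n Xs Ys r"
    unfolding chi_nz_iff[OF graph nonres Xs(3) Ys(3) len] acyclic_pair_def
    using part_ii[OF Xs(3) Ys(3) Xs(2) Ys(2) Xs(1) Ys(1)] Xs(1) Ys(1) by simp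
  note R = rank_part[OF graph, of n, where 'k = 'k]
  show "\<exists>Xs' Ys'. length Xs' = rank_bd TYPE('k) V E lt (n + 1) \<and> length Ys' = length Xs' \<and>
            distinct Xs' \<and> (\<forall>X\<in>set Xs'. simplex V E lt X \<and> card X = n + 1) \<and>
            distinct Ys' \<and> (\<forall>Y\<in>set Ys'. simplex V E lt Y \<and> card Y = n) \<and>
            (minor_chi lt m Xs' Ys' :: 'k fls) \<noteq> 0"
  proof -
    from R obtain Xs' Ys' where H: "length Xs' = rank_bd TYPE('k) V E lt (n + 1)" "length Ys' = length Xs'"
            "distinct Xs'" "\<forall>X\<in>set Xs'. simplex V E lt X \<and> card X = n + 1"
            "distinct Ys'" "\<forall>Y\<in>set Ys'. simplex V E lt Y \<and> card Y = n"
            "(minor_flag Xs' Ys' :: 'k) \<noteq> 0" by blast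
    have "(minor_chi lt m Xs' Ys' :: 'k fls) \<noteq> 0"
      using chi_nz_iff[OF graph nonres H(4) H(6) H(2)] H(7) by simp
    thus ?thesis using H by blast
  qed
  show "\<forall>Xs' Ys'. length Ys' = length Xs' \<and> length Xs' > rank_bd TYPE('k) V E lt (n + 1) \<and>
            distinct Xs' \<and> (\<forall>X\<in>set Xs'. simplex V E lt X \<and> card X = n + 1) \<and>
            distinct Ys' \<and> (\<forall>Y\<in>set Ys'. simplex V E lt Y \<and> card Y = n) \<longrightarrow>
            (minor_chi lt m Xs' Ys' :: 'k fls) = 0"
  proof (intro allI impI)
    fix Xs' Ys' :: "'v set list"
    assume H: "length Ys' = length Xs' \<and> length Xs' > rank_bd TYPE('k) V E lt (n + 1) \<and>
            distinct Xs' \<and> (\<forall>X\<in>set Xs'. simplex V E lt X \<and> card X = n + 1) \<and>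
            distinct Ys' \<and> (\<forall>Y\<in>set Ys'. simplex V E lt Y \<and> card Y = n)"
    hence "(minor_flag Xs' Ys' :: 'k) = 0" using R by blast
    moreover have "length Ys' = length Xs'" "\<forall>X\<in>set Xs'. simplex V E lt X \<and> card X = n + 1"
      "\<forall>Y\<in>set Ys'. simplex V E lt Y \<and> card Y = n" using H by auto
    ultimately show "(minor_chi lt m Xs' Ys' :: 'k fls) = 0"
      using chi_nz_iff[OF graph nonres] by blast
  qed
qed

end
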